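(* Let $v,w\in\mathbb{R}^n$ be such that $v$ has at least one positive entry and at least one negative entry, and $w\neq 0$. Then there exists an invertible matrix $B\in\mathbb{R}^{n\times n}$ with $B\geq 0$ (entrywise) such that $Bv=w$.
   Context: For a matrix or vector, $\geq 0$ means all entries are nonnegative. *)

theory Defs
  imports "HOL-Analysis.Analysis"
begin

end

theory Submission
  imports Defs
begin

lemma inv_of_ker:
  fixes A :: "real^'n^'n"
  assumes "\<And>x. A *v x = 0 \<Longrightarrow> x = 0"
  shows "invertible A"
  using assms invertible_left_inverse matrix_left_invertible_ker by blast

lemma one_sol:
  fixes P Q c :: real
  assumes "P > 0" "Q < 0"
  shows "\<exists>a b. a \<ge> 0 \<and> b \<ge> 0 \<and> a * P + b * Q = c"
proof (cases "c \<ge> 0")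
  case True
  then show ?thesis using assms by (intro exI[of _ "c/P"] exI[of _ 0]) (auto simp: divide_nonneg_pos)
next
  case False
  then show ?thesis using assms by (intro exI[of _ 0] exI[of _ "c/Q"]) (auto simp: divide_nonpos_neg)
qed

lemma two_sol:
  fixes P Q w1 w2 :: real
  assumes "P > 0" "Q < 0" "w1 \<noteq> 0 \<or> w2 \<noteq> 0"
  shows "\<exists>\<alpha> \<beta> \<gamma> \<delta>. \<alpha> \<ge> 0 \<and> \<beta> \<ge> 0 \<and> \<gamma> \<ge> 0 \<and> \<delta> \<ge> 0 \<and>
     \<alpha> * P + \<beta> * Q = w1 \<and> \<gamma> * P + \<delta> * Q = w2 \<and> \<alpha> * \<delta> - \<beta> * \<gamma> \<noteq> 0"
proof -
  obtain a0 b0 where h1: "a0 \<ge> 0" "b0 \<ge> 0" "a0 * P + b0 * Q = w1" using one_sol assms by blast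
  obtain c0 d0 where h2: "c0 \<ge> 0" "d0 \<ge> 0" "c0 * P + d0 * Q = w2" using one_sol assms by blast
  define m where "m = - Q"
  have m: "m > 0" using assms m_def by simp
  have gen: "(a0 + t*m) * (d0 + s*P) - (b0 + t*P) * (c0 + s*m) = (a0*d0 - b0*c0) - t*w2 + s*w1"
    for t s
    unfolding m_def h1(3)[symmetric] h2(3)[symmetric] by (simp add: algebra_simps)
  show ?thesis
  proof (cases "a0*d0 - b0*c0 = 0")
    case False
    then show ?thesis using h1 h2 by blast
  next
    case True
    show ?thesis
    proof (cases "w1 = 0")
      case False
      have "(a0 + 0*m) * (d0 + 1*P) - (b0 + 0*P) * (c0 + 1*m) \<noteq> 0" using gen[of 0 1] True False by simp
      moreover have "(c0 + 1*m) * P + (d0 + 1*P) * Q = w2" using h2(3) unfolding m_def by (simp add: algebra_simps)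
      ultimately show ?thesis using h1 h2 m assms
        by (intro exI[of _ a0] exI[of _ b0] exI[of _ "c0 + 1*m"] exI[of _ "d0 + 1*P"]) auto
    next
      case w: True
      then have "w2 \<noteq> 0" using assms by simp
      have "(a0 + 1*m) * (d0 + 0*P) - (b0 + 1*P) * (c0 + 0*m) \<noteq> 0" using gen[of 1 0] True w \<open>w2\<noteq>0\<close> by simp
      moreover have "(a0 + 1*m) * P + (b0 + 1*P) * Q = w1" using h1(3) unfolding m_def by (simp add: algebra_simps)
      ultimately show ?thesis using h1 h2 m assms
        by (intro exI[of _ "a0 + 1*m"] exI[of _ "b0 + 1*P"] exI[of _ c0] exI[of _ d0]) auto
    qed
  qed
qed

lemma sdelta: "(\<Sum>j\<in>UNIV. (if j = p then c else 0) * (f j::real)) = c * f p" for p :: "'n::finite"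
proof -
  have "(\<Sum>j\<in>UNIV. (if j = p then c else 0) * (f j::real)) = (\<Sum>j\<in>UNIV. if j = p then c * f j else 0)"
    by (rule sum.cong) auto
  then show ?thesis by simp
qed

lemma s2: "(\<Sum>j\<in>UNIV. ((if j = p then c else 0) + (if j = q then d else 0)) * (f j::real)) = c * f p + d * f q" for p :: "'n::finite"
  by (simp only: distrib_right sum.distrib sdelta)

lemma s3: "(\<Sum>j\<in>UNIV. ((if j = i then e else 0) + (if j = p then c else 0) + (if j = q then d else 0)) * (f j::real)) = e * f i + c * f p + d * f q" for p :: "'n::finite"
  by (simp only: distrib_right sum.distrib sdelta)

lemma lemA:
  fixes v w :: "real ^ 'n" and p q :: 'n
  assumes vp: "v $ p > 0" and vq: "v $ q < 0" and wpq: "w $ p \<noteq> 0 \<or> w $ q \<noteq> 0"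
  shows "\<exists>B :: real ^ 'n ^ 'n. invertible B \<and> (\<forall>i j. B $ i $ j \<ge> 0) \<and> B *v v = w"
proof -
  have pq: "p \<noteq> q" using vp vq by auto
  have "\<forall>i. \<exists>ab. fst ab \<ge> 0 \<and> snd ab \<ge> 0 \<and> fst ab * v$p + snd ab * v$q = w$i - v$i"
    using one_sol[OF vp vq] by auto
  then obtain f where f: "\<And>i. fst (f i) \<ge> 0 \<and> snd (f i) \<ge> 0 \<and> fst (f i) * v$p + snd (f i) * v$q = w$i - v$i"
    by metis
  define a where "a i = fst (f i)" for i
  define b where "b i = snd (f i)" for i
  have ab: "a i \<ge> 0" "b i \<ge> 0" "a i * v$p + b i * v$q = w$i - v$i" for i
    using f[of i] unfolding a_def b_def by auto
  obtain \<alpha> \<beta> \<gamma> \<delta> where g: "\<alpha> \<ge> 0" "\<beta> \<ge> 0" "\<gamma> \<ge> 0" "\<delta> \<ge> 0"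
     "\<alpha> * v$p + \<beta> * v$q = w$p" "\<gamma> * v$p + \<delta> * v$q = w$q" "\<alpha> * \<delta> - \<beta> * \<gamma> \<noteq> 0"
    using two_sol[OF vp vq wpq] by blast
  define B :: "real^'n^'n" where "B = (\<chi> i j. if i = p then (if j = p then \<alpha> else 0) + (if j = q then \<beta> else 0)
     else if i = q then (if j = p then \<gamma> else 0) + (if j = q then \<delta> else 0)
     else (if j = i then 1 else 0) + (if j = p then a i else 0) + (if j = q then b i else 0))"
  have Bx: "(B *v x) $ i = (if i = p then \<alpha> * x$p + \<beta> * x$q else if i = q then \<gamma> * x$p + \<delta> * x$q
     else x$i + a i * x$p + b i * x$q)" for x i
    using pq by (cases "i=p"; cases "i=q") (simp_all add: matrix_vector_mult_def B_def s2 s3)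
  have nn: "\<forall>i j. B $ i $ j \<ge> 0" using g ab by (auto simp: B_def)
  have Bv: "B *v v = w"
    unfolding vec_eq_iff using g ab by (auto simp: Bx algebra_simps)
  have inv: "invertible B"
  proof (rule inv_of_ker)
    fix x assume x0: "B *v x = 0"
    have e1: "\<alpha> * x$p + \<beta> * x$q = 0" using x0 Bx[of x p] by simp
    have e2: "\<gamma> * x$p + \<delta> * x$q = 0" using x0 Bx[of x q] pq by simp
    have "(\<alpha> * \<delta> - \<beta> * \<gamma>) * x$p = \<delta> * (\<alpha> * x$p + \<beta> * x$q) - \<beta> * (\<gamma> * x$p + \<delta> * x$q)"
      by (simp add: algebra_simps)
    then have xp: "x$p = 0" using e1 e2 g(7) by simp
    have "(\<alpha> * \<delta> - \<beta> * \<gamma>) * x$q = \<alpha> * (\<gamma> * x$p + \<delta> * x$q) - \<gamma> * (\<alpha> * x$p + \<beta> * x$q)"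
      by (simp add: algebra_simps)
    then have xq: "x$q = 0" using e1 e2 g(7) by simp
    show "x = 0" unfolding vec_eq_iff
    proof
      fix i show "x $ i = 0 $ i"
        using x0 Bx[of x i] xp xq by (auto split: if_splits simp: vec_eq_iff)
    qed
  qed
  show ?thesis using inv nn Bv by blast
qed


theorem mainTheorem2:
  fixes v w :: "real ^ 'n"
  assumes "\<exists>i. v $ i > 0"
    and "\<exists>j. v $ j < 0"
    and "w \<noteq> 0"
  shows "\<exists>B :: real ^ 'n ^ 'n. invertible B \<and> (\<forall>i j. B $ i $ j \<ge> 0) \<and> B *v v = w"
proof -
  obtain p q where vp: "v $ p > 0" and vq: "v $ q < 0" using assms(1,2) by blast
  show ?thesis
  proof (cases "w $ p \<noteq> 0 \<or> w $ q \<noteq> 0")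
    case True
    then show ?thesis using lemA[OF vp vq] by blast
  next
    case False
    obtain k where wk: "w $ k \<noteq> 0" using assms(3) by (auto simp: vec_eq_iff)
    define s where "s i = (if i = p then k else if i = k then p else i)" for i
    have ss: "s (s i) = i" for i by (auto simp: s_def)
    define u where "u = (\<chi> i. w $ (s i))"
    have "u $ p \<noteq> 0" using wk by (simp add: u_def s_def)
    then obtain B1 :: "real^'n^'n" where B1: "invertible B1" "\<forall>i j. B1 $ i $ j \<ge> 0" "B1 *v v = u"
      using lemA[OF vp vq, of u] by blast
    define B :: "real^'n^'n" where "B = (\<chi> i. B1 $ (s i))"
    have Bx: "(B *v x) $ i = (B1 *v x) $ (s i)" for x i
      by (simp add: matrix_vector_mult_def B_def)
    have nn: "\<forall>i j. B $ i $ j \<ge> 0" using B1(2) by (simp add: B_def)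
    have Bv: "B *v v = w" unfolding vec_eq_iff using B1(3) by (simp add: Bx u_def ss)
    have inv: "invertible B"
    proof (rule inv_of_ker)
      fix x assume x0: "B *v x = 0"
      have "(B1 *v x) $ i = 0" for i using Bx[of x "s i"] x0 ss[of i] by (simp add: vec_eq_iff)
      then have "B1 *v x = B1 *v 0" by (simp add: vec_eq_iff)
      moreover have "inj ((*v) B1)" using B1(1) invertible_eq_bij bij_is_inj by blast
      ultimately show "x = 0" by (metis injD)
    qed
    show ?thesis using inv nn Bv by blast
  qed
qed

end
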